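(* Let $v\in\mathbb{N}$ and let $S,S'\subset\mathbb{N}_0$ be finite sets of consecutive integers with $S'>S$ and $d(S,S')=1$. (a) $S$ is down-admissible for $v$ and $S'$ is down-admissible for $v[S]$ if and only if $S'$ is down-admissible for $v$ and $S$ is up-admissible for $v[S']$. In this case $v[S][S']=v[S'](S)$. (b) $S'$ is up-admissible for $v$ and $S$ is up-admissible for $v(S')$ if and only if $S$ is down-admissible for $v$ and $S'$ is up-admissible for $v[S]$. In this case $v(S')(S)=v[S](S')$.
   Context: Fix a prime $p$; $\mathbb{N}=\{1,2,\dots\}$, $\mathbb{N}_0=\mathbb{N}\cup\{0\}$. For $v\in\mathbb{N}$ write $v=\sum_{i=0}^{j}a_ip^i$ with $0\le a_i\le p-1$, $a_j\ne0$, and $a_i=0$ for $i>j$ (the digits of $v$). A finite $S\subset\mathbb{N}_0$ splits uniquely into maximal subsets of consecutive integers (blocks). $S$ is down-admissible for $v$ if (d1) $a_{\min B}\ne0$ for every block $B$ of $S$ and (d2) $s\in S$, $a_{s+1}=0$ imply $s+1\in S$; then $v[S]:=\sum_i\epsilon_ia_ip^i$ with $\epsilon_i=-1$ for $i\in S$ and $\epsilon_i=1$ otherwise. $S$ is up-admissible for $v$ if (u1) $a_{\min B}\ne0$ for every block $B$ of $S$ and (u2) $s\in S$, $a_{s+1}=p-1$ imply $s+1\in S$; then $v(S):=\sum_ka'_kp^k$ with $a'_k=-a_k$ for $k\in S$, $a'_k=a_k+2$ for $k\notin S$, $k-1\in S$, and $a'_k=a_k$ otherwise. Admissibility for $v[S]$,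 $v(S)$ etc. refers to the $p$-adic digits of these numbers. $d(A,B)=\min\{|a-b|:a\in A,b\in B\}$; $S'>S$ means every element of $S'$ exceeds every element of $S$. *)

theory Defs
  imports Main "HOL-Computational_Algebra.Primes"
begin

text \<open>The i-th p-adic digit of an integer n (used only for n \<ge> 1).\<close>
definition digit :: "nat \<Rightarrow> int \<Rightarrow> nat \<Rightarrow> int" where
  "digit p n i = (n div (int p ^ i)) mod int p"

definition block_min :: "nat set \<Rightarrow> nat \<Rightarrow> bool" where
  "block_min S i \<longleftrightarrow> i \<in> S \<and> (i = 0 \<or> i - 1 \<notin> S)"

text \<open>Admissibility is only defined for v in N = {1,2,...}; we require v \<ge> 1.\<close>
definition down_adm :: "nat \<Rightarrow> int \<Rightarrow> nat set \<Rightarrow> bool" where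
  "down_adm p v S \<longleftrightarrow> v \<ge> 1 \<and> finite S \<and>
     (\<forall>i. block_min S i \<longrightarrow> digit p v i \<noteq> 0) \<and>
     (\<forall>s\<in>S. digit p v (s + 1) = 0 \<longrightarrow> s + 1 \<in> S)"

definition up_adm :: "nat \<Rightarrow> int \<Rightarrow> nat set \<Rightarrow> bool" where
  "up_adm p v S \<longleftrightarrow> v \<ge> 1 \<and> finite S \<and>
     (\<forall>i. block_min S i \<longrightarrow> digit p v i \<noteq> 0) \<and>
     (\<forall>s\<in>S. digit p v (s + 1) = int p - 1 \<longrightarrow> s + 1 \<in> S)"

text \<open>v[S]. Digits of v vanish at indices > v, so summing over {..nat v} \<union> S suffices.\<close>
definition down_val :: "nat \<Rightarrow> int \<Rightarrow> nat set \<Rightarrow> int" where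
  "down_val p v S = (\<Sum>i\<in>{..nat v} \<union> S.
      (if i \<in> S then -1 else 1) * digit p v i * int p ^ i)"

definition up_digit :: "nat \<Rightarrow> int \<Rightarrow> nat set \<Rightarrow> nat \<Rightarrow> int" where
  "up_digit p v S k = (if k \<in> S then - digit p v k
      else if k \<ge> 1 \<and> k - 1 \<in> S then digit p v k + 2 else digit p v k)"

definition up_val :: "nat \<Rightarrow> int \<Rightarrow> nat set \<Rightarrow> int" where
  "up_val p v S = (\<Sum>k\<in>{..nat v} \<union> S \<union> Suc ` S. up_digit p v S k * int p ^ k)"

definition consec :: "nat set \<Rightarrow> bool" where
  "consec S \<longleftrightarrow> finite S \<and> S \<noteq> {} \<and> S = {Min S..Max S}"

definition set_dist :: "nat set \<Rightarrow> nat set \<Rightarrow> nat" where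
  "set_dist A B = Min {nat \<bar>int a - int b\<bar> | a b. a \<in> A \<and> b \<in> B}"

definition set_gt :: "nat set \<Rightarrow> nat set \<Rightarrow> bool" where
  "set_gt S' S \<longleftrightarrow> (\<forall>x\<in>S'. \<forall>y\<in>S. y < x)"

end

theory Submission
  imports Defs
begin

lemma digit_add_mult:
  assumes "0 < p" "i < k"
  shows "digit p (n + int p ^ k * m) i = digit p n i"
proof -
  obtain j where kj: "k = i + Suc j" using assms(2) less_iff_Suc_add by auto
  have k: "int p ^ k = int p ^ i * (int p * int p ^ j)"
    unfolding kj by (simp add: power_add)
  have e: "n + int p ^ k * m = n + int p ^ i * (int p * (int p ^ j * m))"
    unfolding k by (simp add: ac_simps)
  have "(n + int p ^ k * m) div int p ^ i = n div int p ^ i + int p * (int p ^ j * m)"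
    unfolding e using assms(1) by (subst div_mult_self2) simp_all
  then show ?thesis unfolding digit_def by simp
qed

lemma digit_div:
  assumes "0 < p"
  shows "digit p (n div int p ^ k) j = digit p n (j + k)"
proof -
  have "int p ^ (j + k) = int p ^ k * int p ^ j" by (simp add: power_add mult.commute)
  then show ?thesis unfolding digit_def by (simp add: zdiv_zmult2_eq)
qed

lemma digit_high:
  assumes "0 < p" "0 \<le> L" "L < int p ^ k" "k \<le> i"
  shows "digit p (L + int p ^ k * m) i = digit p m (i - k)"
proof -
  have "(L + int p ^ k * m) div int p ^ k = m"
    using assms by (simp add: div_pos_pos_trivial)
  then show ?thesis using digit_div[OF assms(1), of "L + int p ^ k * m" k "i - k"] assms(4) by simp
qed

lemma sum_digits:
  assumes "0 < p"
  shows "(\<Sum>i<n. digit p w i * int p ^ i) = w mod int p ^ n"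
proof (induction n)
  case 0 then show ?case by simp
next
  case (Suc n)
  have "w mod int p ^ Suc n = int p ^ n * (w div int p ^ n mod int p) + w mod int p ^ n"
    using zmod_zmult2_eq[of "int p" w "int p ^ n"] assms by (simp add: mult.commute)
  then show ?case using Suc by (simp add: digit_def mult.commute)
qed

lemma blk_sum:
  assumes "0 < p" "x \<le> Suc y"
  shows "(\<Sum>i\<in>{x..y}. digit p w i * int p ^ i) = w mod int p ^ Suc y - w mod int p ^ x"
proof -
  have "{..<Suc y} = {..<x} \<union> {x..y}" using assms(2) by auto
  then have "(\<Sum>i<Suc y. digit p w i * int p ^ i) = (\<Sum>i<x. digit p w i * int p ^ i) + (\<Sum>i\<in>{x..y}. digit p w i * int p ^ i)"
    by (simp add: sum.union_disjoint ivl_disj_int)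
  then show ?thesis using sum_digits[OF assms(1)] by simp
qed

lemma mod_diff:
  assumes "0 < p" "k \<le> n"
  shows "w mod int p ^ n = w mod int p ^ k + int p ^ k * ((w div int p ^ k) mod int p ^ (n - k))"
proof -
  have "int p ^ n = int p ^ k * int p ^ (n - k)" using assms(2) by (simp flip: power_add)
  then show ?thesis using zmod_zmult2_eq[of "int p ^ (n-k)" w "int p ^ k"] assms by simp
qed

lemma digit_zero_big:
  assumes "2 \<le> p" "0 \<le> w" "nat w < i"
  shows "digit p w i = 0"
proof -
  have "w < 2 ^ nat w" using assms(2) less_exp[of "nat w"]
    by (metis of_nat_less_numeral_power_cancel_iff int_nat_eq of_nat_numeral)
  also have "(2::int) ^ nat w \<le> 2 ^ i" using assms(3) by (simp add: power_increasing)
  also have "(2::int) ^ i \<le> int p ^ i" using assms(1) by (simp add: power_mono)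
  finally have "w div int p ^ i = 0" using assms(2) by (simp add: div_pos_pos_trivial)
  then show ?thesis unfolding digit_def by simp
qed

lemma sum_all_digits:
  assumes "2 \<le> p" "0 \<le> w" "finite U" "{..nat w} \<subseteq> U"
  shows "(\<Sum>i\<in>U. digit p w i * int p ^ i) = w"
proof -
  have "(\<Sum>i\<in>U. digit p w i * int p ^ i) = (\<Sum>i\<in>{..nat w}. digit p w i * int p ^ i)"
    apply (rule sum.mono_neutral_right[OF assms(3) assms(4)])
    using digit_zero_big[OF assms(1,2)] by auto
  also have "\<dots> = w mod int p ^ Suc (nat w)"
    using sum_digits[where p=p and n="Suc (nat w)" and w=w] assms(1) lessThan_Suc_atMost by simp
  also have "\<dots> = w"
  proof -
    have "w < 2 ^ nat w" using assms(2) less_exp[of "nat w"]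
      by (metis of_nat_less_numeral_power_cancel_iff int_nat_eq of_nat_numeral)
    also have "(2::int) ^ nat w \<le> 2 ^ Suc (nat w)" by (simp add: power_increasing)
    also have "(2::int) ^ Suc (nat w) \<le> int p ^ Suc (nat w)" by (intro power_mono) (use assms(1) in simp_all)
    finally show ?thesis using assms(2) by simp
  qed
  finally show ?thesis .
qed

lemma DV:
  assumes "2 \<le> p" "0 \<le> w" "finite S"
  shows "down_val p w S = w - 2 * (\<Sum>i\<in>S. digit p w i * int p ^ i)"
proof -
  let ?U = "{..nat w} \<union> S"
  have fU: "finite ?U" using assms(3) by simp
  have "down_val p w S = (\<Sum>i\<in>?U. digit p w i * int p ^ i - 2 * (if i \<in> S then digit p w i * int p ^ i else 0))"
    unfolding down_val_def by (rule sum.cong) auto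
  also have "\<dots> = (\<Sum>i\<in>?U. digit p w i * int p ^ i) - 2 * (\<Sum>i\<in>?U. (if i \<in> S then digit p w i * int p ^ i else 0))"
    by (simp add: sum_subtractf sum_distrib_left)
  also have "(\<Sum>i\<in>?U. (if i \<in> S then digit p w i * int p ^ i else 0)) = (\<Sum>i\<in>S. digit p w i * int p ^ i)"
    using sum.inter_restrict[OF fU, of "\<lambda>i. digit p w i * int p ^ i" S]
    by (simp add: Int_absorb1)
  also have "(\<Sum>i\<in>?U. digit p w i * int p ^ i) = w"
    by (rule sum_all_digits[OF assms(1,2) fU]) auto
  finally show ?thesis .
qed

lemma UV:
  assumes "2 \<le> p" "0 \<le> w" "x \<le> y"
  shows "up_val p w {x..y} = w - 2 * (\<Sum>i\<in>{x..y}. digit p w i * int p ^ i) + 2 * int p ^ Suc y"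
proof -
  let ?S = "{x..y}"
  let ?U = "{..nat w} \<union> ?S \<union> Suc ` ?S"
  let ?f = "\<lambda>i. digit p w i * int p ^ i"
  have fU: "finite ?U" by simp
  have "up_val p w ?S = (\<Sum>i\<in>?U. ?f i - 2 * (if i \<in> ?S then ?f i else 0)
        + 2 * (if i = Suc y then int p ^ i else 0))"
    unfolding up_val_def
  proof (rule sum.cong[OF refl])
    fix k
    show "up_digit p w ?S k * int p ^ k = ?f k - 2 * (if k \<in> ?S then ?f k else 0) + 2 * (if k = Suc y then int p ^ k else 0)"
    proof (cases "k \<in> ?S")
      case True
      then have "k \<noteq> Suc y" by auto
      have u: "up_digit p w ?S k = - digit p w k" unfolding up_digit_def by (rule if_P[OF True])
      show ?thesis unfolding u using True \<open>k \<noteq> Suc y\<close> by (simp add: algebra_simps)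
    next
      case F: False
      show ?thesis
      proof (cases "k = Suc y")
        case True
        then have "1 \<le> k \<and> k - 1 \<in> ?S" using assms(3) by simp
        then have u: "up_digit p w ?S k = digit p w k + 2" unfolding up_digit_def by (simp only: if_not_P[OF F] if_P)
        show ?thesis unfolding u using True F by (simp add: algebra_simps)
      next
        case False
        then have "\<not> (1 \<le> k \<and> k - 1 \<in> ?S)" using F by auto
        then have u: "up_digit p w ?S k = digit p w k" unfolding up_digit_def by (simp only: if_not_P[OF F] if_not_P if_False)
        have i1: "(if k \<in> ?S then ?f k else 0) = 0" by (rule if_not_P[OF F])
        have i2: "(if k = Suc y then int p ^ k else 0) = 0" by (rule if_not_P[OF False])
        show ?thesis unfolding u i1 i2 by simp
      qed
    qed
  qed
  also have "\<dots> = (\<Sum>i\<in>?U. ?f i) - (\<Sum>i\<in>?U. 2 * (if i \<in> ?S then ?f i else 0))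
       + (\<Sum>i\<in>?U. 2 * (if i = Suc y then int p ^ i else 0))"
    by (simp only: sum.distrib sum_subtractf)
  also have "(\<Sum>i\<in>?U. 2 * (if i \<in> ?S then ?f i else 0)) = 2 * (\<Sum>i\<in>?S. ?f i)"
  proof -
    have "?S \<subseteq> ?U" by (rule subsetI) (rule UnI1, rule UnI2)
    then have "?U \<inter> ?S = ?S" by (rule Int_absorb1)
    then have "(\<Sum>i\<in>?U. (if i \<in> ?S then ?f i else 0)) = (\<Sum>i\<in>?S. ?f i)"
      using sum.inter_restrict[OF fU, of ?f ?S] by simp
    then show ?thesis by (simp flip: sum_distrib_left)
  qed
  also have "(\<Sum>i\<in>?U. 2 * (if i = Suc y then int p ^ i else 0)) = 2 * int p ^ Suc y"
  proof -
    have "y \<in> ?S" using assms(3) by simp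
    then have "Suc y \<in> Suc ` ?S" by (rule imageI)
    then have "Suc y \<in> ?U" by (rule UnI2)
    then have "(\<Sum>i\<in>?U. (if i = Suc y then int p ^ i else 0)) = int p ^ Suc y"
      using sum.delta[OF fU, of "Suc y" "\<lambda>i. int p ^ i"] by simp
    then show ?thesis by (simp flip: sum_distrib_left)
  qed
  also have "(\<Sum>i\<in>?U. ?f i) = w"
    by (rule sum_all_digits[OF assms(1,2) fU]) auto
  finally show ?thesis .
qed

lemma block_min_ivl: "x \<le> y \<Longrightarrow> block_min {x..y} i \<longleftrightarrow> i = x"
  unfolding block_min_def by auto

lemma down_adm_ivl:
  assumes "x \<le> y"
  shows "down_adm p w {x..y} \<longleftrightarrow> 1 \<le> w \<and> digit p w x \<noteq> 0 \<and> digit p w (Suc y) \<noteq> 0"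
proof -
  have eq: "(\<forall>s\<in>{x..y}. digit p w (s + 1) = 0 \<longrightarrow> s + 1 \<in> {x..y}) \<longleftrightarrow> digit p w (Suc y) \<noteq> 0"
  proof
    assume L: "\<forall>s\<in>{x..y}. digit p w (s + 1) = 0 \<longrightarrow> s + 1 \<in> {x..y}"
    have "y \<in> {x..y}" using assms by simp
    then have "digit p w (y + 1) = 0 \<longrightarrow> y + 1 \<in> {x..y}" using L by blast
    moreover have "y + 1 \<notin> {x..y}" by simp
    ultimately show "digit p w (Suc y) \<noteq> 0" by simp
  next
    assume R: "digit p w (Suc y) \<noteq> 0"
    show "\<forall>s\<in>{x..y}. digit p w (s + 1) = 0 \<longrightarrow> s + 1 \<in> {x..y}"
    proof (intro ballI impI)
      fix s assume s: "s \<in> {x..y}" "digit p w (s + 1) = 0"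
      have "s \<noteq> y" using R s(2) by auto
      then show "s + 1 \<in> {x..y}" using s(1) by simp
    qed
  qed
  have b: "(\<forall>i. block_min {x..y} i \<longrightarrow> digit p w i \<noteq> 0) \<longleftrightarrow> digit p w x \<noteq> 0"
    by (simp add: block_min_ivl[OF assms])
  show ?thesis unfolding down_adm_def b eq by simp
qed

lemma up_adm_ivl:
  assumes "x \<le> y"
  shows "up_adm p w {x..y} \<longleftrightarrow> 1 \<le> w \<and> digit p w x \<noteq> 0 \<and> digit p w (Suc y) \<noteq> int p - 1"
proof -
  have eq: "(\<forall>s\<in>{x..y}. digit p w (s + 1) = int p - 1 \<longrightarrow> s + 1 \<in> {x..y}) \<longleftrightarrow> digit p w (Suc y) \<noteq> int p - 1"
  proof
    assume L: "\<forall>s\<in>{x..y}. digit p w (s + 1) = int p - 1 \<longrightarrow> s + 1 \<in> {x..y}"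
    have "y \<in> {x..y}" using assms by simp
    then have "digit p w (y + 1) = int p - 1 \<longrightarrow> y + 1 \<in> {x..y}" using L by blast
    moreover have "y + 1 \<notin> {x..y}" by simp
    ultimately show "digit p w (Suc y) \<noteq> int p - 1" by simp
  next
    assume R: "digit p w (Suc y) \<noteq> int p - 1"
    show "\<forall>s\<in>{x..y}. digit p w (s + 1) = int p - 1 \<longrightarrow> s + 1 \<in> {x..y}"
    proof (intro ballI impI)
      fix s assume s: "s \<in> {x..y}" "digit p w (s + 1) = int p - 1"
      have "s \<noteq> y" using R s(2) by auto
      then show "s + 1 \<in> {x..y}" using s(1) by simp
    qed
  qed
  have b: "(\<forall>i. block_min {x..y} i \<longrightarrow> digit p w i \<noteq> 0) \<longleftrightarrow> digit p w x \<noteq> 0"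
    by (simp add: block_min_ivl[OF assms])
  show ?thesis unfolding up_adm_def b eq by simp
qed

lemma digit_pred:
  assumes "0 < p" "H mod int p \<noteq> 0"
  shows "digit p (H - 1) 0 = H mod int p - 1" and "1 \<le> j \<Longrightarrow> digit p (H - 1) j = digit p H j"
proof -
  have "0 \<le> H mod int p" "H mod int p < int p" using assms by simp_all
  then have r: "0 \<le> H mod int p - 1" "H mod int p - 1 < int p" using assms(2) by auto
  have e: "H - 1 = (H mod int p - 1) + int p * (H div int p)" by (simp add: algebra_simps)
  show "digit p (H - 1) 0 = H mod int p - 1" unfolding digit_def using r by (simp add: e)
  assume "1 \<le> j"
  have "digit p (H - 1) j = digit p (H div int p) (j - 1)"
    using digit_high[OF assms(1) r(1), where k=1 and m="H div int p" and i=j] r \<open>1 \<le> j\<close> e by (metis power_one_right)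
  also have "\<dots> = digit p H j" using digit_div[OF assms(1), of H 1 "j - 1"] \<open>1 \<le> j\<close> by simp
  finally show "digit p (H - 1) j = digit p H j" .
qed

lemma core:
  assumes p2: "2 \<le> p" and V1: "1 \<le> V" and ab: "a \<le> b" and bc: "b < c"
  shows "((down_adm p V {a..b} \<and> down_adm p (down_val p V {a..b}) {Suc b..c})
            \<longleftrightarrow> (down_adm p V {Suc b..c} \<and> up_adm p (down_val p V {Suc b..c}) {a..b}))
       \<and> (down_adm p V {a..b} \<and> down_adm p (down_val p V {a..b}) {Suc b..c}
            \<longrightarrow> down_val p (down_val p V {a..b}) {Suc b..c} = up_val p (down_val p V {Suc b..c}) {a..b})
       \<and> ((up_adm p V {Suc b..c} \<and> up_adm p (up_val p V {Suc b..c}) {a..b})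
            \<longleftrightarrow> (down_adm p V {a..b} \<and> up_adm p (down_val p V {a..b}) {Suc b..c}))
       \<and> (up_adm p V {Suc b..c} \<and> up_adm p (up_val p V {Suc b..c}) {a..b}
            \<longrightarrow> up_val p (up_val p V {Suc b..c}) {a..b} = up_val p (down_val p V {a..b}) {Suc b..c})"
proof -
  have p0: "0 < p" using p2 by simp
  have Ppos: "\<And>k. 0 < int p ^ k" using p0 by simp
  define r where "r = V mod int p ^ a"
  define E where "E = (V div int p ^ a) mod int p ^ (Suc b - a)"
  define H where "H = V div int p ^ Suc b"
  define D where "D = H mod int p ^ (c - b)"
  define H2 where "H2 = V div int p ^ Suc c"
  define dA where "dA = digit p V a"
  define dB where "dB = digit p V (Suc b)"
  define dC where "dC = digit p V (Suc c)"
  have r_b: "0 \<le> r" "r < int p ^ a" unfolding r_def by (rule pos_mod_sign[OF Ppos], rule pos_mod_bound[OF Ppos])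
  have E_b: "0 \<le> E" "E < int p ^ (Suc b - a)" unfolding E_def by (rule pos_mod_sign[OF Ppos], rule pos_mod_bound[OF Ppos])
  have D_b: "0 \<le> D" "D < int p ^ (c - b)" unfolding D_def by (rule pos_mod_sign[OF Ppos], rule pos_mod_bound[OF Ppos])
  have V0: "0 \<le> V" using V1 by simp
  have H_nn: "0 \<le> H" unfolding H_def by (rule pos_imp_zdiv_nonneg_iff[OF Ppos, THEN iffD2, OF V0])
  have H2_nn: "0 \<le> H2" unfolding H2_def by (rule pos_imp_zdiv_nonneg_iff[OF Ppos, THEN iffD2, OF V0])
  have modb: "V mod int p ^ Suc b = r + int p ^ a * E"
    unfolding r_def E_def by (rule mod_diff[OF p0]) (use ab in simp)
  have e1: "Suc c - Suc b = c - b" by simp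
  have "V mod int p ^ Suc c = V mod int p ^ Suc b + int p ^ Suc b * ((V div int p ^ Suc b) mod int p ^ (Suc c - Suc b))"
    by (rule mod_diff[OF p0]) (use bc in simp)
  then have modc: "V mod int p ^ Suc c = V mod int p ^ Suc b + int p ^ Suc b * D"
    unfolding e1 D_def H_def .
  have VH: "V = V mod int p ^ Suc b + int p ^ Suc b * H"
    unfolding H_def by simp
  have Pc: "int p ^ Suc c = int p ^ Suc b * int p ^ (c - b)"
    using bc by (simp flip: power_add)
  have Pb: "int p ^ Suc b = int p ^ a * int p ^ (Suc b - a)"
    using ab by (simp flip: power_add)
  have H2H: "H2 = H div int p ^ (c - b)"
    unfolding H2_def H_def Pc using Ppos by (simp add: zdiv_zmult2_eq less_imp_le)
  have HD: "H = D + int p ^ (c - b) * H2"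
    unfolding H2H D_def by simp
  have dvdB: "int p dvd int p ^ (Suc b - a)" using ab by (simp add: dvd_power)
  have dvdC: "int p dvd int p ^ (c - b)" using bc by (simp add: dvd_power)
  have dA_E: "dA = E mod int p"
    unfolding dA_def E_def digit_def using dvdB by (simp add: mod_mod_cancel)
  have dB_H: "dB = H mod int p" unfolding dB_def digit_def H_def by simp
  have dB_D: "dB = D mod int p" unfolding dB_H D_def using dvdC by (simp add: mod_mod_cancel)
  have dC_H2: "dC = H2 mod int p" unfolding dC_def digit_def H2_def by simp
  have dB_r: "0 \<le> dB" "dB < int p" unfolding dB_H using p0 by simp_all
  have sumA: "(\<Sum>i\<in>{a..b}. digit p V i * int p ^ i) = int p ^ a * E"
    using blk_sum[OF p0, of a b V] ab modb unfolding r_def by simp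
  have sumA': "(\<Sum>i\<in>{Suc b..c}. digit p V i * int p ^ i) = int p ^ Suc b * D"
    using blk_sum[OF p0, of "Suc b" c V] bc modc by simp
  define w where "w = down_val p V {a..b}"
  define u where "u = down_val p V {Suc b..c}"
  define z where "z = up_val p V {Suc b..c}"
  have w_eq: "w = V - 2 * (int p ^ a * E)"
    unfolding w_def using DV[OF p2, of V "{a..b}"] V1 sumA by simp
  have u_eq: "u = V - 2 * (int p ^ Suc b * D)"
    unfolding u_def using DV[OF p2, of V "{Suc b..c}"] V1 sumA' by simp
  have z_eq: "z = V - 2 * (int p ^ Suc b * D) + 2 * int p ^ Suc c"
    unfolding z_def using UV[OF p2, of V "Suc b" c] V1 sumA' bc by simp
  have Lb: "0 \<le> V mod int p ^ Suc b" "V mod int p ^ Suc b < int p ^ Suc b"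
    using pos_mod_sign[OF Ppos] pos_mod_bound[OF Ppos] by blast+
  have u_alt: "u = V + int p ^ Suc b * (- 2 * D)" unfolding u_eq by simp
  have u_low: "\<And>i. i < Suc b \<Longrightarrow> digit p u i = digit p V i"
    unfolding u_alt by (rule digit_add_mult[OF p0])
  have u_alt2: "u = V mod int p ^ Suc b + int p ^ Suc b * (H - 2 * D)"
    unfolding u_eq by (subst VH) (simp add: algebra_simps)
  have hm: "(H - 2 * D) mod int p = (- dB) mod int p"
  proof -
    have s1: "(H - 2 * D) mod int p = (H mod int p - (2 * D) mod int p) mod int p"
      by (simp only: mod_diff_eq)
    have s2: "(2 * D) mod int p = (2 * (D mod int p)) mod int p"
      by (simp only: mod_mult_right_eq)
    have s3: "(H mod int p - (2 * (D mod int p)) mod int p) mod int p = (H mod int p - 2 * (D mod int p)) mod int p"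
      by (simp only: mod_diff_right_eq)
    have s4: "H mod int p - 2 * (D mod int p) = - dB" using dB_H dB_D by simp
    show ?thesis unfolding s1 s2 s3 s4 ..
  qed
  have u_B: "digit p u (Suc b) = (- dB) mod int p"
  proof -
    have "digit p u (Suc b) = digit p (H - 2 * D) 0"
      unfolding u_alt2 using digit_high[OF p0 Lb, where i="Suc b"] by simp
    also have "\<dots> = (H - 2 * D) mod int p" unfolding digit_def by simp
    also have "\<dots> = (- dB) mod int p" by (rule hm)
    finally show ?thesis .
  qed
  have u_pos: "dC \<noteq> 0 \<Longrightarrow> 1 \<le> u"
  proof -
    assume "dC \<noteq> 0"
    then have "H2 \<noteq> 0" unfolding dC_H2 by auto
    then have "1 \<le> H2" using H2_nn by simp
    then have "int p ^ (c - b) * 1 \<le> int p ^ (c - b) * H2"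
      by (rule mult_left_mono) (use Ppos[of "c - b"] in linarith)
    then have "int p ^ (c - b) \<le> int p ^ (c - b) * H2" by simp
    then have "1 \<le> H - 2 * D" using HD D_b by simp
    then have "int p ^ Suc b * 1 \<le> int p ^ Suc b * (H - 2 * D)"
      using Ppos by (intro mult_left_mono) (simp_all add: less_imp_le)
    then show "1 \<le> u" unfolding u_alt2 using Lb Ppos[of "Suc b"] by linarith
  qed
  have z_alt: "z = V + int p ^ Suc b * (2 * int p ^ (c - b) - 2 * D)" unfolding z_eq Pc by (simp add: algebra_simps)
  have z_low: "\<And>i. i < Suc b \<Longrightarrow> digit p z i = digit p V i"
    unfolding z_alt by (rule digit_add_mult[OF p0])
  have z_alt2: "z = V mod int p ^ Suc b + int p ^ Suc b * (H - 2 * D + 2 * int p ^ (c - b))"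
    unfolding z_eq Pc by (subst VH) (simp add: algebra_simps)
  have z_B: "digit p z (Suc b) = (- dB) mod int p"
  proof -
    obtain t where t: "int p ^ (c - b) = int p * t" using dvdC by (elim dvdE)
    have "digit p z (Suc b) = digit p (H - 2 * D + 2 * int p ^ (c - b)) 0"
      unfolding z_alt2 using digit_high[OF p0 Lb, where i="Suc b"] by simp
    also have "\<dots> = (H - 2 * D + 2 * int p ^ (c - b)) mod int p" unfolding digit_def by simp
    also have "\<dots> = (H - 2 * D + int p * (2 * t)) mod int p" unfolding t by (simp add: ac_simps)
    also have "\<dots> = (H - 2 * D) mod int p" by (rule mod_mult_self2)
    also have "\<dots> = (- dB) mod int p" by (rule hm)
    finally show ?thesis .
  qed
  have z_pos: "1 \<le> z"
  proof -
    have "1 \<le> H2 + 1" using H2_nn by simp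
    then have "int p ^ (c - b) * 1 \<le> int p ^ (c - b) * (H2 + 1)"
      by (rule mult_left_mono) (use Ppos[of "c - b"] in linarith)
    then have "int p ^ (c - b) \<le> int p ^ (c - b) * (H2 + 1)" by simp
    then have "1 \<le> H - 2 * D + 2 * int p ^ (c - b)" using HD D_b by (simp add: algebra_simps)
    then have "int p ^ Suc b * 1 \<le> int p ^ Suc b * (H - 2 * D + 2 * int p ^ (c - b))"
      using Ppos by (intro mult_left_mono) (simp_all add: less_imp_le)
    then show "1 \<le> z" unfolding z_alt2 using Lb Ppos[of "Suc b"] by linarith
  qed
  define Lw where "Lw = r + int p ^ a * (int p ^ (Suc b - a) - E)"
  have w_alt: "w = Lw + int p ^ Suc b * (H - 1)"
  proof -
    have "w = r + int p ^ a * E + int p ^ Suc b * H - 2 * (int p ^ a * E)"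
      unfolding w_eq using VH modb by simp
    then show ?thesis unfolding Lw_def Pb by (simp add: algebra_simps)
  qed
  have w_facts: "1 \<le> w \<and> digit p w (Suc b) = dB - 1 \<and> digit p w (Suc c) = dC
      \<and> (\<Sum>i\<in>{Suc b..c}. digit p w i * int p ^ i) = int p ^ Suc b * (D - 1)"
    if nA: "dA \<noteq> 0" and nB: "dB \<noteq> 0"
  proof -
    have "E \<noteq> 0" using nA dA_E by auto
    then have E1: "1 \<le> E" using E_b by simp
    have "D \<noteq> 0" using nB dB_D by auto
    then have D1: "1 \<le> D" using D_b by simp
    have "H \<noteq> 0" using nB dB_H by auto
    then have H1: "1 \<le> H" using H_nn by simp
    have Hm: "H mod int p \<noteq> 0" using nB dB_H by simp
    have t1: "1 \<le> int p ^ (Suc b - a) - E" using E_b by simp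
    have "int p ^ a * 1 \<le> int p ^ a * (int p ^ (Suc b - a) - E)"
      using t1 Ppos by (intro mult_left_mono) (simp_all add: less_imp_le)
    then have Lw0: "1 \<le> Lw" unfolding Lw_def using r_b Ppos[of a] by linarith
    have "int p ^ a * (int p ^ (Suc b - a) - E) \<le> int p ^ a * (int p ^ (Suc b - a) - 1)"
      using E1 Ppos by (intro mult_left_mono) (simp_all add: less_imp_le)
    then have Lw1: "Lw < int p ^ Suc b" unfolding Lw_def Pb using r_b by (simp add: algebra_simps)
    have Lw0': "0 \<le> Lw" using Lw0 by simp
    have "0 \<le> int p ^ Suc b * (H - 1)" using H1 Ppos by (simp add: less_imp_le)
    then have wpos: "1 \<le> w" unfolding w_alt using Lw0 by linarith
    have wB: "digit p w (Suc b) = dB - 1"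
      unfolding w_alt using digit_high[OF p0 Lw0' Lw1, where i="Suc b" and m="H - 1"] digit_pred(1)[OF p0 Hm] dB_H by simp
    have "digit p w (Suc c) = digit p (H - 1) (c - b)"
      unfolding w_alt using digit_high[OF p0 Lw0' Lw1, where i="Suc c" and m="H - 1"] bc by simp
    also have "\<dots> = digit p H (c - b)" using digit_pred(2)[OF p0 Hm] bc by simp
    also have "\<dots> = dC" unfolding H_def dC_def using digit_div[OF p0, of V "Suc b" "c - b"] bc by simp
    finally have wC: "digit p w (Suc c) = dC" .
    have wdiv: "w div int p ^ Suc b = H - 1" unfolding w_alt using p0 Lw0' Lw1
      by (subst div_mult_self2) simp_all
    have wmodb: "w mod int p ^ Suc b = Lw" unfolding w_alt using Lw0' Lw1 by simp
    have "H - 1 = (D - 1) + int p ^ (c - b) * H2" using HD by simp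
    then have "(H - 1) mod int p ^ (c - b) = (D - 1) mod int p ^ (c - b)"
      by (simp only: mod_mult_self2)
    also have "\<dots> = D - 1" using D1 D_b by (intro mod_pos_pos_trivial) simp_all
    finally have Hmod: "(H - 1) mod int p ^ (c - b) = D - 1" .
    have "(\<Sum>i\<in>{Suc b..c}. digit p w i * int p ^ i) = w mod int p ^ Suc c - w mod int p ^ Suc b"
      using blk_sum[OF p0, of "Suc b" c w] bc by simp
    also have "\<dots> = int p ^ Suc b * (D - 1)"
      using mod_diff[OF p0, of "Suc b" "Suc c" w] bc wdiv Hmod by simp
    finally show ?thesis using wpos wB wC by simp
  qed
  have negm: "(- dB) mod int p = (if dB = 0 then 0 else int p - dB)"
  proof (cases "dB = 0")
    case False
    then have "0 \<le> int p - dB" "int p - dB < int p" using dB_r by auto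
    moreover have "- dB = (int p - dB) + int p * (-1)" by simp
    ultimately show ?thesis using False by (metis mod_mult_self2 mod_pos_pos_trivial)
  qed simp
  have P2: "2 \<le> int p" using p2 by simp
  have sumAu: "(\<Sum>i\<in>{a..b}. digit p u i * int p ^ i) = int p ^ a * E"
    unfolding sumA[symmetric] by (rule sum.cong) (simp_all add: u_low)
  have sumAz: "(\<Sum>i\<in>{a..b}. digit p z i * int p ^ i) = int p ^ a * E"
    unfolding sumA[symmetric] by (rule sum.cong) (simp_all add: z_low)
  have uA: "digit p u a = dA" unfolding dA_def using u_low ab by simp
  have zA: "digit p z a = dA" unfolding dA_def using z_low ab by simp
  have bc': "Suc b \<le> c" using bc by simp
  have I1: "down_adm p V {a..b} \<longleftrightarrow> dA \<noteq> 0 \<and> dB \<noteq> 0"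
    using down_adm_ivl[OF ab, of p V] V1 unfolding dA_def dB_def by simp
  have I2: "down_adm p V {Suc b..c} \<longleftrightarrow> dB \<noteq> 0 \<and> dC \<noteq> 0"
    using down_adm_ivl[OF bc', of p V] V1 unfolding dC_def dB_def by simp
  have I3: "up_adm p V {Suc b..c} \<longleftrightarrow> dB \<noteq> 0 \<and> dC \<noteq> int p - 1"
    using up_adm_ivl[OF bc', of p V] V1 unfolding dC_def dB_def by simp
  have nm: "((- dB) mod int p \<noteq> int p - 1) \<longleftrightarrow> dB \<noteq> 1"
    using negm P2 by auto
  have I4: "up_adm p z {a..b} \<longleftrightarrow> dA \<noteq> 0 \<and> dB \<noteq> 1"
    using up_adm_ivl[OF ab, of p z] z_pos zA z_B nm by simp
  have I5: "up_adm p u {a..b} \<longleftrightarrow> 1 \<le> u \<and> dA \<noteq> 0 \<and> dB \<noteq> 1"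
    using up_adm_ivl[OF ab, of p u] uA u_B nm by simp
  have part1: "(down_adm p V {a..b} \<and> down_adm p w {Suc b..c})
            \<longleftrightarrow> (down_adm p V {Suc b..c} \<and> up_adm p u {a..b})"
  proof (cases "dA \<noteq> 0 \<and> dB \<noteq> 0")
    case True
    then have wf: "1 \<le> w" "digit p w (Suc b) = dB - 1" "digit p w (Suc c) = dC"
      using w_facts by auto
    then have "down_adm p w {Suc b..c} \<longleftrightarrow> dB \<noteq> 1 \<and> dC \<noteq> 0"
      using down_adm_ivl[OF bc', of p w] by simp
    then show ?thesis unfolding I1 I2 I5 using u_pos True by blast
  next
    case False
    then show ?thesis unfolding I1 I2 I5 by blast
  qed
  have part3: "(up_adm p V {Suc b..c} \<and> up_adm p z {a..b})
            \<longleftrightarrow> (down_adm p V {a..b} \<and> up_adm p w {Suc b..c})"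
  proof (cases "dA \<noteq> 0 \<and> dB \<noteq> 0")
    case True
    then have wf: "1 \<le> w" "digit p w (Suc b) = dB - 1" "digit p w (Suc c) = dC"
      using w_facts by auto
    have "dB - 1 \<noteq> int p - 1 \<longleftrightarrow> True" using dB_r by simp
    then have "up_adm p w {Suc b..c} \<longleftrightarrow> dB \<noteq> 1 \<and> dC \<noteq> int p - 1"
      using up_adm_ivl[OF bc', of p w] wf by simp
    then show ?thesis unfolding I1 I3 I4 using True by blast
  next
    case False
    then show ?thesis unfolding I1 I3 I4 by blast
  qed
  have part2: "down_val p w {Suc b..c} = up_val p u {a..b}"
    if h: "down_adm p V {a..b}" "down_adm p w {Suc b..c}"
  proof -
    have n: "dA \<noteq> 0" "dB \<noteq> 0" using h I1 by auto
    note wf = w_facts[OF n]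
    have "1 \<le> u" using part1 h I5 by auto
    then have "up_val p u {a..b} = u - 2 * (int p ^ a * E) + 2 * int p ^ Suc b"
      using UV[OF p2, of u a b] ab sumAu by simp
    moreover have "down_val p w {Suc b..c} = w - 2 * (int p ^ Suc b * (D - 1))"
      using DV[OF p2, of w "{Suc b..c}"] wf by simp
    ultimately show ?thesis unfolding u_eq w_eq by (simp add: algebra_simps)
  qed
  have part4: "up_val p z {a..b} = up_val p w {Suc b..c}"
    if h: "up_adm p V {Suc b..c}" "up_adm p z {a..b}"
  proof -
    have n: "dA \<noteq> 0" "dB \<noteq> 0" using h I3 I4 by auto
    note wf = w_facts[OF n]
    have "up_val p z {a..b} = z - 2 * (int p ^ a * E) + 2 * int p ^ Suc b"
      using UV[OF p2, of z a b] ab sumAz z_pos by simp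
    moreover have "up_val p w {Suc b..c} = w - 2 * (int p ^ Suc b * (D - 1)) + 2 * int p ^ Suc c"
      using UV[OF p2, of w "Suc b" c] wf bc' by simp
    ultimately show ?thesis unfolding z_eq w_eq by (simp add: algebra_simps)
  qed
  show ?thesis using part1 part2 part3 part4 unfolding w_def u_def z_def by blast
qed

lemma shape:
  assumes "consec S" "consec S'" "set_gt S' S" "set_dist S S' = 1"
  shows "\<exists>a b c. S = {a..b} \<and> S' = {Suc b..c} \<and> a \<le> b \<and> b < c"
proof -
  define a where "a = Min S"
  define b where "b = Max S"
  define m where "m = Min S'"
  define c where "c = Max S'"
  have fS: "finite S" "S \<noteq> {}" and S: "S = {a..b}" using assms(1) unfolding consec_def a_def b_def by auto
  have fS': "finite S'" "S' \<noteq> {}" and S': "S' = {m..c}" using assms(2) unfolding consec_def m_def c_def by auto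
  have ab: "a \<le> b" using fS unfolding a_def b_def by simp
  have mc: "m \<le> c" using fS' unfolding m_def c_def by simp
  have bS: "b \<in> S" and mS': "m \<in> S'" using fS fS' unfolding b_def m_def by auto
  have bm: "b < m" using assms(3) bS mS' unfolding set_gt_def by auto
  define T where "T = {nat \<bar>int x - int y\<bar> | x y. x \<in> S \<and> y \<in> S'}"
  have T: "T = (\<lambda>(x, y). nat \<bar>int x - int y\<bar>) ` (S \<times> S')" unfolding T_def by auto
  have fT: "finite T" unfolding T using fS fS' by simp
  have "m - b = nat \<bar>int b - int m\<bar>" using bm by simp
  then have inT: "m - b \<in> T" unfolding T_def using bS mS' by blast
  have lb: "\<forall>t\<in>T. m - b \<le> t"
  proof
    fix t assume "t \<in> T"
    then obtain x y where "x \<in> S" "y \<in> S'" "t = nat \<bar>int x - int y\<bar>" unfolding T_def by auto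
    moreover have "x \<le> b" "m \<le> y" using calculation(1,2) S S' by auto
    ultimately show "m - b \<le> t" by simp
  qed
  have "Min T = m - b" using fT inT lb by (intro Min_eqI) auto
  then have "m = Suc b" using assms(4) bm unfolding set_dist_def T_def by simp
  then show ?thesis using S S' ab mc by auto
qed

theorem lemma2p13:
  fixes p v :: nat and S S' :: "nat set"
  assumes "prime p" and "v \<ge> 1"
    and "consec S" and "consec S'"
    and "set_gt S' S" and "set_dist S S' = 1"
  shows "((down_adm p (int v) S \<and> down_adm p (down_val p (int v) S) S')
            \<longleftrightarrow> (down_adm p (int v) S' \<and> up_adm p (down_val p (int v) S') S))
       \<and> (down_adm p (int v) S \<and> down_adm p (down_val p (int v) S) S'
            \<longrightarrow> down_val p (down_val p (int v) S) S' = up_val p (down_val p (int v) S') S)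
       \<and> ((up_adm p (int v) S' \<and> up_adm p (up_val p (int v) S') S)
            \<longleftrightarrow> (down_adm p (int v) S \<and> up_adm p (down_val p (int v) S) S'))
       \<and> (up_adm p (int v) S' \<and> up_adm p (up_val p (int v) S') S
            \<longrightarrow> up_val p (up_val p (int v) S') S = up_val p (down_val p (int v) S) S')"
proof -
  obtain a b c where e: "S = {a..b}" "S' = {Suc b..c}" and ab: "a \<le> b" and bc: "b < c"
    using shape[OF assms(3-6)] by blast
  have p2: "2 \<le> p" using assms(1) by (simp add: prime_ge_2_nat)
  have v1: "1 \<le> int v" using assms(2) by simp
  show ?thesis unfolding e by (rule core[OF p2 v1 ab bc])
qed

end
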